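(* Assume $\eta$ is supported on $\{\mathbf{x}\in E:|\mathbf{x}|_\infty\le R\}$ for some $R>0$. Let $\rho$ be a Borel probability measure on $\mathsf{X}$ and let $Y$ be a discrete-time Markov process on $\mathsf{X}$ with transition kernel $\mu$ and $Y_0\sim\rho$. Let $k_1,k_2$ be nonnegative integers. Then $|f_n(Y_{k_2})-f_n(Y_{k_1})|_\infty\le 2g(Y_0)+(k_1+k_2)R$ almost surely.
   Context: Fix $\theta_a,\theta_d>0$, positive integers $n,N$, $E=\mathbb{R}^N$ with the $\infty$-norm $|\cdot|_\infty$, and a Borel probability measure $\eta$ on $E$ with finite mean. $[k]=\{0,\dots,k-1\}$; $|\psi|=\sum_{i\in[n]}\psi(i)$. State space: $\mathsf{X}=\{(\psi,\mathbf{v})\in\{0,1\}^{[n]}\times E^{[n+1]}:\sum_{i\in[n]}\psi(i)(\mathbf{v}(i)-\mathbf{v}(n))=0\}$ (subspace of the product topology, discrete on $\{0,1\}$, Euclidean on $E$). For $i\in[n]$: $r_i(\psi)=\frac{\theta_d\psi(i)+\theta_a(1-\psi(i))}{\theta_d|\psi|+\theta_a(n-|\psi|)}$; $s_i(\psi)$ agrees with $\psi$ except $s_i(\psi)(i)=1-\psi(i)$. For $\mathsf{x}=(\psi,\mathbf{v})\in\mathsf{X}$, $\lambda_i^{\mathsf{x}}$ is the law of $(s_i(\psi),\mathbf{w})$ with $\mathbf{w}(j)=\mathbf{v}(j)$ for $j\in[n]\setminus\{i\}$ and $(\mathbf{w}(i),\mathbf{w}(n))$ equal to $(\mathbf{v}(i),\mathbf{v}(n))$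 if $|\psi|=\psi(i)=1$; $(\mathbf{v}(i),\mathbf{v}(n)-\frac{\mathbf{v}(i)-\mathbf{v}(n)}{|\psi|-1})$ if $|\psi|>\psi(i)=1$; $(\mathbf{x}+\mathbf{v}(n),\frac{\mathbf{x}}{|\psi|+1}+\mathbf{v}(n))$ with $\mathbf{x}\sim\eta$ if $\psi(i)=0$. $\mu(\mathsf{x},B)=\sum_{i\in[n]}r_i(\psi)\lambda_i^{\mathsf{x}}(B)$. $f_i(\psi,\mathbf{v})=\mathbf{v}(i)$ for $i\in[n+1]$, and $g(\mathsf{x})=\max\{|f_i(\mathsf{x})|_\infty:i\in[n+1]\}$. *)

theory Defs
  imports "HOL-Probability.Probability"
begin

text \<open>States (psi, v): psi is a 0/1 vector indexed by [n] (extensional on {..<n}),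
  v a vector of points of E = real^'N indexed by [n+1] (extensional on {..n}).\<close>

type_synonym 'N state = "(nat \<Rightarrow> bool) \<times> (nat \<Rightarrow> real^'N)"

definition cardpsi :: "nat \<Rightarrow> (nat \<Rightarrow> bool) \<Rightarrow> nat" where
  "cardpsi n psi = card {i. i < n \<and> psi i}"

definition Xset :: "nat \<Rightarrow> ('N::finite) state set" where
  "Xset n = {(psi, v). psi \<in> extensional {..<n} \<and> v \<in> extensional {..n} \<and>
              (\<Sum>i<n. (if psi i then 1 else 0) *\<^sub>R (v i - v n)) = 0}"

definition XM :: "nat \<Rightarrow> ('N::finite) state measure" where
  "XM n = restrict_space
     ((\<Pi>\<^sub>M i\<in>{..<n}. (count_space UNIV :: bool measure)) \<Otimes>\<^sub>M (\<Pi>\<^sub>M i\<in>{..n}. (borel :: (real^'N) measure)))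
     (Xset n)"

definition rate :: "real \<Rightarrow> real \<Rightarrow> nat \<Rightarrow> (nat \<Rightarrow> bool) \<Rightarrow> nat \<Rightarrow> real" where
  "rate \<theta>a \<theta>d n psi i =
     (if psi i then \<theta>d else \<theta>a) /
     (\<theta>d * real (cardpsi n psi) + \<theta>a * (real n - real (cardpsi n psi)))"

definition lam :: "(real^'N::finite) measure \<Rightarrow> nat \<Rightarrow> nat \<Rightarrow> 'N state \<Rightarrow> 'N state set \<Rightarrow> real" where
  "lam \<eta> n i x B =
    (let psi = fst x; v = snd x; c = cardpsi n psi in
     if psi i then
       (if c = 1 then indicator B (psi(i := False), v)
        else indicator B (psi(i := False), v(n := v n - (1 / (real c - 1)) *\<^sub>R (v i - v n))))
     else measure \<eta> {y \<in> space \<eta>.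
            (psi(i := True), v(i := y + v n, n := (1 / (real c + 1)) *\<^sub>R y + v n)) \<in> B})"

definition mu :: "(real^'N::finite) measure \<Rightarrow> real \<Rightarrow> real \<Rightarrow> nat \<Rightarrow> 'N state \<Rightarrow> 'N state set \<Rightarrow> real" where
  "mu \<eta> \<theta>a \<theta>d n x B = (\<Sum>i<n. rate \<theta>a \<theta>d n (fst x) i * lam \<eta> n i x B)"

definition gfun :: "nat \<Rightarrow> ('N::finite) state \<Rightarrow> real" where
  "gfun n x = Max ((\<lambda>i. infnorm (snd x i)) ` {..n})"

text \<open>Y is a discrete-time Markov process (w.r.t. its natural filtration) with kernel mu:
  finite-dimensional cylinder characterisation of P(Y_{k+1} \<in> B | Y_0..Y_k) = mu(Y_k, B).\<close>
definition markov_chain ::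
  "'a measure \<Rightarrow> ('N::finite) state measure \<Rightarrow> ('N state \<Rightarrow> 'N state set \<Rightarrow> real) \<Rightarrow> (nat \<Rightarrow> 'a \<Rightarrow> 'N state) \<Rightarrow> bool" where
  "markov_chain M S K Y \<longleftrightarrow>
     (\<forall>k. Y k \<in> measurable M S) \<and>
     (\<forall>k (B :: nat \<Rightarrow> 'N state set). (\<forall>i\<le>Suc k. B i \<in> sets S) \<longrightarrow>
        measure M {\<omega> \<in> space M. \<forall>i\<le>Suc k. Y i \<omega> \<in> B i} =
        (\<integral>\<omega>. indicator {\<omega> \<in> space M. \<forall>i\<le>k. Y i \<omega> \<in> B i} \<omega> * K (Y k \<omega>) (B (Suc k)) \<partial>M))"

end

theory Submission
  imports Defs
begin


lemma infnorm_sum: "infnorm (\<Sum>j\<in>F. f j) \<le> (\<Sum>j\<in>F. infnorm (f j :: real^'N))"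
proof (induction F rule: infinite_finite_induct)
  case (insert x F) then show ?case
    using infnorm_triangle[of "f x" "sum f F"] by simp
qed (auto simp: infnorm_0)

lemma gfun_ge: "j \<le> n \<Longrightarrow> infnorm (snd x j) \<le> gfun n x"
  unfolding gfun_def by (rule Max_ge) auto

lemma gfun_le: "(\<And>j. j \<le> n \<Longrightarrow> infnorm (snd x j) \<le> b) \<Longrightarrow> gfun n x \<le> b"
  unfolding gfun_def by (subst Max_le_iff) auto

lemma mean_bound:
  fixes v :: "nat \<Rightarrow> real^'N"
  assumes X: "(psi, v) \<in> Xset n" and i: "i < n" "psi i" and c: "cardpsi n psi \<noteq> 1"
  shows "infnorm (v n - (1 / (real (cardpsi n psi) - 1)) *\<^sub>R (v i - v n)) \<le> gfun n (psi, v)"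
proof -
  define A where "A = {j. j < n \<and> psi j}"
  define c where "c = cardpsi n psi"
  define G where "G = gfun n (psi, v)"
  have fA: "finite A" unfolding A_def by auto
  have iA: "i \<in> A" using i unfolding A_def by auto
  have cA: "card A = c" unfolding A_def c_def cardpsi_def by simp
  have c2: "c \<ge> 2" using c iA fA cA c_def
    by (metis One_nat_def card_0_eq empty_iff less_2_cases not_le)
  have cA': "card (A - {i}) = c - 1" using cA iA fA by simp
  have "(\<Sum>j<n. (if psi j then 1 else 0) *\<^sub>R (v j - v n)) = 0" using X unfolding Xset_def by auto
  moreover have "(\<Sum>j<n. (if psi j then 1 else 0) *\<^sub>R (v j - v n)) = (\<Sum>j\<in>A. v j - v n)"
  proof -
    have "(\<Sum>j<n. (if psi j then 1 else 0) *\<^sub>R (v j - v n)) = (\<Sum>j<n. if psi j then v j - v n else 0)"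
      by (rule sum.cong) auto
    also have "\<dots> = (\<Sum>j\<in>{j\<in>{..<n}. psi j}. v j - v n)" using sum.inter_filter[of "{..<n}" "\<lambda>j. v j - v n" psi] by simp
    also have "{j\<in>{..<n}. psi j} = A" unfolding A_def by auto
    finally show ?thesis .
  qed
  ultimately have s0: "(\<Sum>j\<in>A. v j - v n) = 0" by simp
  have "(\<Sum>j\<in>A. v j - v n) = (v i - v n) + (\<Sum>j\<in>A-{i}. v j - v n)"
    using fA iA by (simp add: sum.remove)
  hence vi: "v i - v n = - (\<Sum>j\<in>A-{i}. v j - v n)" using s0 by (simp add: eq_neg_iff_add_eq_0)
  have cpos: "real c - 1 > 0" using c2 by simp
  have "v n - (1 / (real c - 1)) *\<^sub>R (v i - v n) = v n + (1 / (real c - 1)) *\<^sub>R ((\<Sum>j\<in>A-{i}. v j) - real (c - 1) *\<^sub>R v n)"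
  proof -
    have "(\<Sum>j\<in>A-{i}. v j - v n) = (\<Sum>j\<in>A-{i}. v j) - real (c - 1) *\<^sub>R v n"
      by (simp only: sum_subtractf sum_constant_scaleR cA')
    thus ?thesis using vi by (simp only: scaleR_minus_right) simp
  qed
  also have "\<dots> = (1 / (real c - 1)) *\<^sub>R (\<Sum>j\<in>A-{i}. v j)"
  proof -
    have "real (c - 1) = real c - 1" using c2 by (simp add: of_nat_diff)
    hence "v n + (1 / (real c - 1)) *\<^sub>R ((\<Sum>j\<in>A-{i}. v j) - real (c - 1) *\<^sub>R v n)
       = v n + (1 / (real c - 1)) *\<^sub>R (\<Sum>j\<in>A-{i}. v j) - ((1 / (real c - 1)) * (real c - 1)) *\<^sub>R v n"
      by (simp add: scaleR_diff_right)
    also have "(1 / (real c - 1)) * (real c - 1) = 1" using cpos by simp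
    finally show ?thesis by simp
  qed
  finally have eq: "v n - (1 / (real c - 1)) *\<^sub>R (v i - v n) = (1 / (real c - 1)) *\<^sub>R (\<Sum>j\<in>A-{i}. v j)" .
  have "infnorm (\<Sum>j\<in>A-{i}. v j) \<le> (\<Sum>j\<in>A-{i}. infnorm (v j))" by (rule infnorm_sum)
  also have "\<dots> \<le> (\<Sum>j\<in>A-{i}. G)"
    apply (rule sum_mono) unfolding G_def using gfun_ge[of _ n "(psi, v)"] A_def by auto
  also have "\<dots> = (real c - 1) * G" using cA' c2 by (simp add: of_nat_diff)
  finally have "infnorm (\<Sum>j\<in>A-{i}. v j) \<le> (real c - 1) * G" .
  hence "infnorm ((1 / (real c - 1)) *\<^sub>R (\<Sum>j\<in>A-{i}. v j)) \<le> G"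
    using cpos by (simp add: infnorm_mul field_simps)
  thus ?thesis using eq unfolding c_def G_def by simp
qed

lemma null_subset:
  assumes "AE y in M. P y" "S \<subseteq> {y\<in>space M. \<not> P y}"
  shows "measure M S = 0"
proof (cases "S \<in> sets M")
  case True
  from assms(1) obtain N where N: "{y\<in>space M. \<not> P y} \<subseteq> N" "emeasure M N = 0" "N \<in> sets M"
    by (auto elim: AE_E)
  have "emeasure M S \<le> emeasure M N" using N assms(2) by (intro emeasure_mono) auto
  hence "emeasure M S = 0" using N by simp
  thus ?thesis by (simp add: measure_def)
next
  case False thus ?thesis by (simp add: measure_notin_sets)
qed

lemma gfun_snd: "gfun n (p, v) = gfun n (q, v)" unfolding gfun_def by simp

lemma lam_zero:
  fixes x :: "'N::finite state"
  assumes X: "x \<in> Xset n" and i: "i < n" and AEe: "AE y in \<eta>. infnorm y \<le> R" and R: "R \<ge> 0"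
    and B: "B \<subseteq> {z. b < gfun n z}" and b: "gfun n x + R \<le> b"
  shows "lam \<eta> n i x B = 0"
proof -
  obtain psi v where xv: "x = (psi, v)" by (cases x)
  define c where "c = cardpsi n psi"
  define G where "G = gfun n (psi, v)"
  have Gv: "\<And>j. j \<le> n \<Longrightarrow> infnorm (v j) \<le> G" unfolding G_def using gfun_ge[of _ n "(psi,v)"] by auto
  have bG: "G + R \<le> b" using b xv G_def by simp
  show ?thesis
  proof (cases "psi i")
    case True
    show ?thesis
    proof (cases "c = 1")
      case True
      have "gfun n (psi(i := False), v) = G" unfolding G_def by (rule gfun_snd)
      hence "(psi(i := False), v) \<notin> B" using B bG R by auto
      thus ?thesis using True \<open>psi i\<close> xv c_def unfolding lam_def Let_def by simp
    next
      case False
      define w where "w = v n - (1 / (real c - 1)) *\<^sub>R (v i - v n)"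
      have "infnorm w \<le> G" unfolding w_def G_def c_def
        using mean_bound[of psi v n i] X xv i \<open>psi i\<close> False c_def by simp
      hence "gfun n (psi(i := False), v(n := w)) \<le> G"
        by (intro gfun_le) (auto simp: Gv)
      hence "(psi(i := False), v(n := w)) \<notin> B" using B bG R by auto
      thus ?thesis using False \<open>psi i\<close> xv c_def w_def unfolding lam_def Let_def by simp
    qed
  next
    case False
    have "measure \<eta> {y \<in> space \<eta>.
            (psi(i := True), v(i := y + v n, n := (1 / (real c + 1)) *\<^sub>R y + v n)) \<in> B} = 0"
    proof (rule null_subset[OF AEe], safe)
      fix y assume y: "y \<in> space \<eta>" and inB: "(psi(i := True), v(i := y + v n, n := (1 / (real c + 1)) *\<^sub>R y + v n)) \<in> B"
        and yR: "infnorm y \<le> R"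
      have G0: "infnorm (v n) \<le> G" using Gv by simp
      have c1: "(1 / (real c + 1)) \<le> 1" "0 \<le> 1 / (real c + 1)" by auto
      have "infnorm ((1 / (real c + 1)) *\<^sub>R y) \<le> R"
      proof -
        have "infnorm ((1 / (real c + 1)) *\<^sub>R y) = (1 / (real c + 1)) * infnorm y"
          using c1 by (simp add: infnorm_mul)
        also have "\<dots> \<le> 1 * R" using c1 yR infnorm_pos_le[of y] by (intro mult_mono) auto
        finally show ?thesis by simp
      qed
      hence h1: "infnorm ((1 / (real c + 1)) *\<^sub>R y + v n) \<le> G + R"
        using infnorm_triangle[of "(1 / (real c + 1)) *\<^sub>R y" "v n"] G0 by linarith
      have h2: "infnorm (y + v n) \<le> G + R" using infnorm_triangle[of y "v n"] G0 yR by linarith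
      have "gfun n (psi(i := True), v(i := y + v n, n := (1 / (real c + 1)) *\<^sub>R y + v n)) \<le> G + R"
        apply (intro gfun_le)
        using h1 h2 Gv R i by (auto simp: add_increasing2)
      thus False using inB B bG by auto
    qed
    thus ?thesis using False xv c_def unfolding lam_def Let_def by simp
  qed
qed


lemma gfun_meas: "gfun n \<in> borel_measurable (XM n)"
  unfolding XM_def gfun_def
  apply (rule measurable_restrict_space1)
  apply (rule borel_measurable_Max)
   apply simp
  apply (rule borel_measurable_continuous_on[where f=infnorm])
   apply (intro continuous_intros)
  apply (rule measurable_compose[OF measurable_snd])
  apply (rule measurable_component_singleton)
  apply simp
  done

lemma space_XM: "space (XM n) \<subseteq> Xset n"
  unfolding XM_def by (simp add: space_restrict_space)

lemma mu_zero:
  fixes x :: "'N::finite state"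
  assumes "x \<in> Xset n" and "AE y in \<eta>. infnorm y \<le> R" and "R \<ge> 0"
    and "B \<subseteq> {z. b < gfun n z}" and "gfun n x + R \<le> b"
  shows "mu \<eta> \<theta>a \<theta>d n x B = 0"
  unfolding mu_def using lam_zero[OF assms(1) _ assms(2-5)] by simp

theorem lemma4:
  fixes \<theta>a \<theta>d R :: real and n k1 k2 :: nat
    and \<eta> :: "(real^'N::finite) measure" and \<rho> :: "'N state measure"
    and M :: "'a measure" and Y :: "nat \<Rightarrow> 'a \<Rightarrow> 'N state"
  assumes "\<theta>a > 0" and "\<theta>d > 0" and "n > 0"
    and "prob_space \<eta>" and "sets \<eta> = sets borel" and "integrable \<eta> (\<lambda>x. x)"
    and "R > 0" and "AE x in \<eta>. infnorm x \<le> R"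
    and "prob_space \<rho>" and "sets \<rho> = sets (XM n)"
    and "prob_space M"
    and "markov_chain M (XM n) (mu \<eta> \<theta>a \<theta>d n) Y"
    and "distr M (XM n) (Y 0) = \<rho>"
  shows "AE \<omega> in M. infnorm (snd (Y k2 \<omega>) n - snd (Y k1 \<omega>) n)
                     \<le> 2 * gfun n (Y 0 \<omega>) + real (k1 + k2) * R"
proof -
  note Ymeas = assms(12)[unfolded markov_chain_def, THEN conjunct1]
  note Yeq = assms(12)[unfolded markov_chain_def, THEN conjunct2, rule_format]
  interpret P: prob_space M by (rule assms(11))
  have R0: "R \<ge> 0" using assms(7) by simp
  have key: "AE \<omega> in M. gfun n (Y 0 \<omega>) \<le> a \<longrightarrow> gfun n (Y k \<omega>) \<le> a + real k * R" for a k
  proof (induction k)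
    case 0 show ?case by simp
  next
    case (Suc k)
    define A where "A = {x\<in>space (XM n :: 'N state measure). gfun n x \<le> a}"
    define C where "C = {x\<in>space (XM n :: 'N state measure). a + real (Suc k) * R < gfun n x}"
    define Bf where "Bf = (\<lambda>i. if i = 0 then A else if i = Suc k then C else space (XM n :: 'N state measure))"
    note gfun_meas[measurable]
    have AS: "A \<in> sets (XM n)" unfolding A_def by measurable
    have CS: "C \<in> sets (XM n)" unfolding C_def by measurable
    have BS: "\<forall>i\<le>Suc k. Bf i \<in> sets (XM n)" unfolding Bf_def using AS CS by auto
    have Ysp: "\<And>i \<omega>. \<omega> \<in> space M \<Longrightarrow> Y i \<omega> \<in> space (XM n)"
      using Ymeas measurable_space by metis
    have "(\<integral>\<omega>. indicator {\<omega> \<in> space M. \<forall>i\<le>k. Y i \<omega> \<in> Bf i} \<omega> * mu \<eta> \<theta>a \<theta>d n (Y k \<omega>) (Bf (Suc k)) \<partial>M) = 0"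
    proof (rule integral_eq_zero_AE)
      show "AE \<omega> in M. indicator {\<omega> \<in> space M. \<forall>i\<le>k. Y i \<omega> \<in> Bf i} \<omega> * mu \<eta> \<theta>a \<theta>d n (Y k \<omega>) (Bf (Suc k)) = 0"
        using Suc.IH
      proof (rule AE_mp, intro AE_I2 impI)
        fix \<omega> assume \<omega>: "\<omega> \<in> space M" and ih: "gfun n (Y 0 \<omega>) \<le> a \<longrightarrow> gfun n (Y k \<omega>) \<le> a + real k * R"
        show "indicator {\<omega> \<in> space M. \<forall>i\<le>k. Y i \<omega> \<in> Bf i} \<omega> * mu \<eta> \<theta>a \<theta>d n (Y k \<omega>) (Bf (Suc k)) = 0"
        proof (cases "\<forall>i\<le>k. Y i \<omega> \<in> Bf i")
          case False thus ?thesis by simp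
        next
          case True
          hence "Y 0 \<omega> \<in> A" unfolding Bf_def by auto
          hence "gfun n (Y k \<omega>) \<le> a + real k * R" using ih A_def by auto
          hence "mu \<eta> \<theta>a \<theta>d n (Y k \<omega>) (Bf (Suc k)) = 0"
            apply (intro mu_zero[OF _ assms(8) R0, where b="a + real (Suc k) * R"])
            using Ysp[OF \<omega>] space_XM apply blast
            unfolding Bf_def C_def apply auto[1]
            by (simp add: algebra_simps)
          thus ?thesis by simp
        qed
      qed
    qed
    hence m0: "measure M {\<omega> \<in> space M. \<forall>i\<le>Suc k. Y i \<omega> \<in> Bf i} = 0" using Yeq[of k Bf] BS by simp
    have NS: "{\<omega> \<in> space M. \<forall>i\<le>Suc k. Y i \<omega> \<in> Bf i} \<in> sets M"
    proof -
      have "{\<omega> \<in> space M. \<forall>i\<le>Suc k. Y i \<omega> \<in> Bf i} = {\<omega> \<in> space M. \<forall>i\<in>{..Suc k}. Y i \<omega> \<in> Bf i}" by auto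
      also have "\<dots> \<in> sets M"
        apply (rule sets.sets_Collect_finite_All)
        using measurable_sets[OF Ymeas[rule_format]] BS by (auto simp: vimage_def Int_def conj_commute)
      finally show ?thesis .
    qed
    have "AE \<omega> in M. \<not> (\<forall>i\<le>Suc k. Y i \<omega> \<in> Bf i)"
      using AE_iff_measurable[OF NS, of "\<lambda>\<omega>. \<not> (\<forall>i\<le>Suc k. Y i \<omega> \<in> Bf i)"] m0
      by (simp add: P.emeasure_eq_measure)
    thus ?case
    proof (rule AE_mp, intro AE_I2 impI)
      fix \<omega> assume \<omega>: "\<omega> \<in> space M" and nb: "\<not> (\<forall>i\<le>Suc k. Y i \<omega> \<in> Bf i)" and g0: "gfun n (Y 0 \<omega>) \<le> a"
      show "gfun n (Y (Suc k) \<omega>) \<le> a + real (Suc k) * R"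
      proof (rule ccontr)
        assume "\<not> ?thesis"
        hence "\<forall>i\<le>Suc k. Y i \<omega> \<in> Bf i" using g0 Ysp[OF \<omega>] unfolding Bf_def A_def C_def by auto
        thus False using nb by simp
      qed
    qed
  qed
  have key2: "AE \<omega> in M. gfun n (Y k \<omega>) \<le> gfun n (Y 0 \<omega>) + real k * R" for k
  proof -
    have "AE \<omega> in M. \<forall>q::rat. gfun n (Y 0 \<omega>) \<le> of_rat q \<longrightarrow> gfun n (Y k \<omega>) \<le> of_rat q + real k * R"
      using key by (simp add: AE_all_countable)
    thus ?thesis
    proof (rule AE_mp, intro AE_I2 impI)
      fix \<omega> assume h: "\<forall>q::rat. gfun n (Y 0 \<omega>) \<le> of_rat q \<longrightarrow> gfun n (Y k \<omega>) \<le> of_rat q + real k * R"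
      show "gfun n (Y k \<omega>) \<le> gfun n (Y 0 \<omega>) + real k * R"
      proof (rule ccontr)
        assume "\<not> ?thesis"
        hence "gfun n (Y 0 \<omega>) < gfun n (Y k \<omega>) - real k * R" by simp
        then obtain r where r: "r \<in> \<rat>" "gfun n (Y 0 \<omega>) < r" "r < gfun n (Y k \<omega>) - real k * R"
          using Rats_dense_in_real by blast
        then obtain q where "r = of_rat q" by (auto elim: Rats_cases)
        hence "gfun n (Y k \<omega>) \<le> r + real k * R" using h r(2) by auto
        thus False using r(3) by simp
      qed
    qed
  qed
  show ?thesis
    using key2[of k1] key2[of k2]
  proof (rule AE_mp[OF _ AE_mp], intro AE_I2 impI)
    fix \<omega> assume h1: "gfun n (Y k1 \<omega>) \<le> gfun n (Y 0 \<omega>) + real k1 * R"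
      and h2: "gfun n (Y k2 \<omega>) \<le> gfun n (Y 0 \<omega>) + real k2 * R"
    have "infnorm (snd (Y k2 \<omega>) n - snd (Y k1 \<omega>) n) \<le> infnorm (snd (Y k2 \<omega>) n) + infnorm (snd (Y k1 \<omega>) n)"
      using infnorm_triangle[of "snd (Y k2 \<omega>) n" "- snd (Y k1 \<omega>) n"] by (simp add: infnorm_neg)
    also have "\<dots> \<le> gfun n (Y k2 \<omega>) + gfun n (Y k1 \<omega>)"
      by (intro add_mono gfun_ge) auto
    finally show "infnorm (snd (Y k2 \<omega>) n - snd (Y k1 \<omega>) n) \<le> 2 * gfun n (Y 0 \<omega>) + real (k1 + k2) * R"
      using h1 h2 by (simp add: algebra_simps)
  qed
qed

end
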